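(* Let $n, r$ be positive integers with $n\geqslant\lceil r/2\rceil+2$. Then $m(L(K_n),r)\geqslant\lfloor (r+2)^2/8\rfloor$.
   Context: All graphs are finite, simple and undirected. For a nonnegative integer $r$ and a graph $G$, the $r$-neighbor bootstrap percolation process on $G$ starts with a set $A_0\subseteq V(G)$ of initially active vertices, and for $i\geqslant 1$, $A_i=A_{i-1}\cup\{v\in V(G) : |N(v)\cap A_{i-1}|\geqslant r\}$, where $N(v)$ is the set of neighbors of $v$. The set $A_0$ is a percolating set if $\bigcup_{i\geqslant 0}A_i=V(G)$; $m(G,r)$ is the minimum size of a percolating set. $L(G)$ is the line graph of $G$ (vertex set $E(G)$, two vertices adjacent iff the edges share an endpoint), and $K_n$ is the complete graph on $n$ vertices. *)

theory Defs
  imports Complex_Main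
begin

text \<open>A finite simple graph is given by a vertex set V and a symmetric irreflexive
  adjacency relation E (only its restriction to V matters).\<close>

definition nbhd :: "'a set \<Rightarrow> ('a \<Rightarrow> 'a \<Rightarrow> bool) \<Rightarrow> 'a \<Rightarrow> 'a set" where
  "nbhd V E v = {u \<in> V. E v u}"

fun boot_step :: "'a set \<Rightarrow> ('a \<Rightarrow> 'a \<Rightarrow> bool) \<Rightarrow> nat \<Rightarrow> 'a set \<Rightarrow> nat \<Rightarrow> 'a set" where
  "boot_step V E r A0 0 = A0"
| "boot_step V E r A0 (Suc i) =
     boot_step V E r A0 i \<union> {v \<in> V. card (nbhd V E v \<inter> boot_step V E r A0 i) \<ge> r}"

definition percolating :: "'a set \<Rightarrow> ('a \<Rightarrow> 'a \<Rightarrow> bool) \<Rightarrow> nat \<Rightarrow> 'a set \<Rightarrow> bool" where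
  "percolating V E r A0 \<longleftrightarrow> A0 \<subseteq> V \<and> (\<Union>i. boot_step V E r A0 i) = V"

definition min_perc :: "'a set \<Rightarrow> ('a \<Rightarrow> 'a \<Rightarrow> bool) \<Rightarrow> nat \<Rightarrow> nat" where
  "min_perc V E r = Min (card ` {A. percolating V E r A})"

text \<open>Line graph L(K_n) of the complete graph on {0..<n}: vertices are the edges
  (2-element subsets), adjacent iff distinct and sharing an endpoint.\<close>
definition LK_vertices :: "nat \<Rightarrow> nat set set" where
  "LK_vertices n = {e. e \<subseteq> {0..<n} \<and> card e = 2}"

definition LK_adj :: "nat set \<Rightarrow> nat set \<Rightarrow> bool" where
  "LK_adj e f \<longleftrightarrow> e \<noteq> f \<and> e \<inter> f \<noteq> {}"

end

theory Submission
  imports Defs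
begin

definition Vs :: "nat set \<Rightarrow> nat set set" where
  "Vs W = {e. e \<subseteq> W \<and> card e = 2}"

lemma finite_Vs: "finite W \<Longrightarrow> finite (Vs W)"
  unfolding Vs_def by (rule finite_subset[of _ "Pow W"]) auto

lemma boot_sub: "A0 \<subseteq> V \<Longrightarrow> boot_step V E r A0 i \<subseteq> V"
  by (induction i) auto

lemma two_elem: "card e = 2 \<Longrightarrow> a \<in> e \<Longrightarrow> b \<in> e \<Longrightarrow> a \<noteq> b \<Longrightarrow> e = {a,b}"
  by (auto simp: card_2_iff)

lemma four:
  assumes "u \<noteq> w" "v \<in> Vs (W - {u,w})"
  shows "card (nbhd (Vs W) LK_adj v - Vs (W - {u,w})) \<le> 4"
proof -
  from assms(2) obtain x y where xy: "v = {x,y}" "x \<noteq> y" "x \<in> W - {u,w}" "y \<in> W - {u,w}"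
    unfolding Vs_def by (auto simp: card_2_iff)
  have "nbhd (Vs W) LK_adj v - Vs (W - {u,w}) \<subseteq> set [{x,u},{x,w},{y,u},{y,w}]"
  proof
    fix e assume e: "e \<in> nbhd (Vs W) LK_adj v - Vs (W - {u,w})"
    then have e1: "e \<subseteq> W" "card e = 2" "e \<inter> v \<noteq> {}" "\<not> e \<subseteq> W - {u,w}"
      unfolding nbhd_def Vs_def LK_adj_def by auto
    then obtain b where b: "b \<in> e" "b = u \<or> b = w" by auto
    from e1 obtain a where a: "a \<in> e" "a = x \<or> a = y" using xy by auto
    have "a \<noteq> b" using a b xy by auto
    then have "e = {a,b}" using two_elem[OF e1(2) a(1) b(1)] by simp
    then show "e \<in> set [{x,u},{x,w},{y,u},{y,w}]" using a b by auto
  qed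
  then have "card (nbhd (Vs W) LK_adj v - Vs (W - {u,w})) \<le> card (set [{x,u},{x,w},{y,u},{y,w}])"
    by (rule card_mono[rotated]) simp
  also have "\<dots> \<le> 4" using card_length[of "[{x,u},{x,w},{y,u},{y,w}]"] by simp
  finally show ?thesis .
qed

lemma restrict:
  assumes "finite W" "u \<noteq> w"
  shows "boot_step (Vs W) LK_adj r A i \<inter> Vs (W - {u,w})
     \<subseteq> boot_step (Vs (W - {u,w})) LK_adj (r-4) (A \<inter> Vs (W - {u,w})) i"
proof (induction i)
  case 0
  then show ?case by simp
next
  case (Suc i)
  let ?W' = "W - {u,w}"
  let ?B = "boot_step (Vs W) LK_adj r A i"
  let ?B' = "boot_step (Vs ?W') LK_adj (r-4) (A \<inter> Vs ?W') i"
  show ?case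
  proof
    fix v assume v: "v \<in> boot_step (Vs W) LK_adj r A (Suc i) \<inter> Vs ?W'"
    show "v \<in> boot_step (Vs ?W') LK_adj (r-4) (A \<inter> Vs ?W') (Suc i)"
    proof (cases "v \<in> ?B")
      case True
      then have "v \<in> ?B'" using Suc.IH v by blast
      then show ?thesis by (subst boot_step.simps, rule UnI1)
    next
      case False
      have "v \<in> ?B \<union> {v \<in> Vs W. r \<le> card (nbhd (Vs W) LK_adj v \<inter> ?B)}"
        using v by (simp only: boot_step.simps Int_iff)
      then have c: "r \<le> card (nbhd (Vs W) LK_adj v \<inter> ?B)" using False by blast
      have sub: "nbhd (Vs W) LK_adj v \<inter> ?B \<subseteq> (nbhd (Vs ?W') LK_adj v \<inter> ?B')
          \<union> (nbhd (Vs W) LK_adj v - Vs ?W')"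
      proof
        fix e assume e: "e \<in> nbhd (Vs W) LK_adj v \<inter> ?B"
        show "e \<in> (nbhd (Vs ?W') LK_adj v \<inter> ?B') \<union> (nbhd (Vs W) LK_adj v - Vs ?W')"
        proof (cases "e \<in> Vs ?W'")
          case True
          then have "e \<in> ?B'" using Suc.IH e by blast
          moreover have "e \<in> nbhd (Vs ?W') LK_adj v" using True e unfolding nbhd_def by simp
          ultimately show ?thesis by simp
        next
          case False
          then show ?thesis using e by simp
        qed
      qed
      have fin: "finite (Vs W)" "finite (Vs ?W')" using assms finite_Vs by auto
      have f1: "finite (nbhd (Vs ?W') LK_adj v \<inter> ?B')"
        by (rule finite_subset[OF _ fin(2)]) (auto simp: nbhd_def)
      have f2: "finite (nbhd (Vs W) LK_adj v - Vs ?W')"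
        by (rule finite_subset[OF _ fin(1)]) (auto simp: nbhd_def)
      have "r \<le> card ((nbhd (Vs ?W') LK_adj v \<inter> ?B') \<union> (nbhd (Vs W) LK_adj v - Vs ?W'))"
        using c card_mono[OF _ sub] f1 f2 by (meson finite_UnI order_trans)
      also have "\<dots> \<le> card (nbhd (Vs ?W') LK_adj v \<inter> ?B') + card (nbhd (Vs W) LK_adj v - Vs ?W')"
        by (rule card_Un_le)
      also have "\<dots> \<le> card (nbhd (Vs ?W') LK_adj v \<inter> ?B') + 4"
        using four[OF assms(2)] v by simp
      finally have "r - 4 \<le> card (nbhd (Vs ?W') LK_adj v \<inter> ?B')" by simp
      then have "v \<in> {v \<in> Vs ?W'. r - 4 \<le> card (nbhd (Vs ?W') LK_adj v \<inter> ?B')}" using v by blast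
      then show ?thesis by (subst boot_step.simps, rule UnI2)
    qed
  qed
qed

lemma first_step:
  assumes "percolating V E r A" "A \<noteq> V"
  shows "\<exists>v\<in>V - A. r \<le> card (nbhd V E v \<inter> A)"
proof (rule ccontr)
  assume na: "\<not> ?thesis"
  have "boot_step V E r A i = A" for i
    using na by (induction i) auto
  then have "(\<Union>i. boot_step V E r A i) = A" by simp
  then show False using assms unfolding percolating_def by simp
qed

lemma choose2_bound:
  assumes "r + 4 \<le> 2 * m"
  shows "(r+2)^2 div 8 \<le> m choose 2"
proof -
  have m1: "r + 2 \<le> 2 * (m - 1)" using assms by simp
  have "(r+2)^2 \<le> (2*(m-1))^2" using m1 by (rule power_mono) simp
  also have "\<dots> = 4 * ((m-1)*(m-1))" by (simp add: power2_eq_square)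
  also have "\<dots> \<le> 4 * (m * (m-1))" by simp
  finally have "(r+2)^2 div 8 \<le> (4 * (m * (m-1))) div 8" by (rule div_le_mono)
  also have "(4 * (m * (m-1))) div 8 = m * (m-1) div 2" by simp
  also have "\<dots> = m choose 2" by (simp add: choose_two)
  finally show ?thesis .
qed

lemma main:
  "finite W \<Longrightarrow> r + 4 \<le> 2 * card W \<Longrightarrow> percolating (Vs W) LK_adj r A
    \<Longrightarrow> (r+2)^2 div 8 \<le> card A"
proof (induction r arbitrary: W A rule: less_induct)
  case (less r)
  have AV: "A \<subseteq> Vs W" using less.prems unfolding percolating_def by simp
  show ?case
  proof (cases "A = Vs W")
    case True
    have "card (Vs W) = card W choose 2" unfolding Vs_def using less.prems n_subsets by blast
    then show ?thesis using True choose2_bound less.prems by simp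
  next
    case False
    then obtain v where v: "v \<in> Vs W - A" "r \<le> card (nbhd (Vs W) LK_adj v \<inter> A)"
      using first_step less.prems by blast
    then obtain u w where uw: "v = {u,w}" "u \<noteq> w" "u \<in> W" "w \<in> W"
      unfolding Vs_def by (auto simp: card_2_iff)
    have finA: "finite A" using AV finite_Vs less.prems finite_subset by blast
    show ?thesis
    proof (cases "r \<le> 4")
      case True
      have "(r+2)^2 div 8 \<le> r" using True
        by (cases r; cases "r - 1"; cases "r - 2"; cases "r-3"; auto simp: power2_eq_square)
      also have "\<dots> \<le> card A" using v finA
        by (meson card_mono inf_le2 order_trans)
      finally show ?thesis .
    next
      case False
      then obtain s where s: "r = s + 4" by (metis add.commute le_Suc_ex nat_le_linear)
      let ?W' = "W - {u,w}"
      let ?A' = "A \<inter> Vs ?W'"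
      have cW: "card ?W' = card W - 2" using uw less.prems by (simp add: card_Diff_subset)
      have perc: "percolating (Vs ?W') LK_adj s ?A'"
        unfolding percolating_def
      proof (intro conjI)
        show "?A' \<subseteq> Vs ?W'" by simp
        show "(\<Union>i. boot_step (Vs ?W') LK_adj s ?A' i) = Vs ?W'"
        proof
          show "(\<Union>i. boot_step (Vs ?W') LK_adj s ?A' i) \<subseteq> Vs ?W'"
            using boot_sub[of ?A' "Vs ?W'"] by blast
          show "Vs ?W' \<subseteq> (\<Union>i. boot_step (Vs ?W') LK_adj s ?A' i)"
          proof
            fix e assume e: "e \<in> Vs ?W'"
            then have "e \<in> Vs W" unfolding Vs_def by auto
            then obtain i where "e \<in> boot_step (Vs W) LK_adj r A i"
              using less.prems unfolding percolating_def by blast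
            then have "e \<in> boot_step (Vs ?W') LK_adj (r-4) ?A' i"
              using restrict[OF less.prems(1) uw(2), of r A i] e by blast
            then show "e \<in> (\<Union>i. boot_step (Vs ?W') LK_adj s ?A' i)" using s by auto
          qed
        qed
      qed
      have IH: "(s+2)^2 div 8 \<le> card ?A'"
        using less.IH[of s ?W' ?A'] s less.prems cW perc by simp
      have disj: "?A' \<inter> (nbhd (Vs W) LK_adj v \<inter> A) = {}"
        using uw unfolding Vs_def nbhd_def LK_adj_def by auto
      have "card ?A' + card (nbhd (Vs W) LK_adj v \<inter> A) = card (?A' \<union> (nbhd (Vs W) LK_adj v \<inter> A))"
        using disj finA by (simp add: card_Un_disjoint)
      also have "\<dots> \<le> card A" using finA by (intro card_mono) auto
      finally have "(s+2)^2 div 8 + r \<le> card A" using IH v by linarith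
      moreover have "(r+2)^2 div 8 = (s+2)^2 div 8 + r"
      proof -
        have "(r+2)^2 = (s+2)^2 + 8 * r" using s by (simp add: power2_eq_square algebra_simps)
        then show ?thesis by simp
      qed
      ultimately show ?thesis by simp
    qed
  qed
qed

theorem lemma5p3:
  fixes n r :: nat
  assumes "n > 0" and "r > 0" and "int n \<ge> \<lceil>real r / 2\<rceil> + 2"
  shows "min_perc (LK_vertices n) LK_adj r \<ge> (r + 2)^2 div 8"
proof -
  have eq: "LK_vertices n = Vs {0..<n}" unfolding LK_vertices_def Vs_def by simp
  have "real r / 2 \<le> of_int \<lceil>real r / 2\<rceil>" by (rule le_of_int_ceiling)
  then have "real r / 2 + 2 \<le> real n" using assms(3) by linarith
  then have rn: "r + 4 \<le> 2 * card {0..<n}" by simp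
  let ?S = "card ` {A. percolating (Vs {0..<n}) LK_adj r A}"
  have fin: "finite ?S"
    by (rule finite_imageI, rule finite_subset[of _ "Pow (Vs {0..<n})"])
       (auto simp: percolating_def finite_Vs)
  have "percolating (Vs {0..<n}) LK_adj r (Vs {0..<n})"
    unfolding percolating_def
  proof (intro conjI subset_refl equalityI)
    show "(\<Union>i. boot_step (Vs {0..<n}) LK_adj r (Vs {0..<n}) i) \<subseteq> Vs {0..<n}"
      using boot_sub[of "Vs {0..<n}" "Vs {0..<n}"] by blast
    show "Vs {0..<n} \<subseteq> (\<Union>i. boot_step (Vs {0..<n}) LK_adj r (Vs {0..<n}) i)"
    proof
      fix x assume "x \<in> Vs {0..<n}"
      then show "x \<in> (\<Union>i. boot_step (Vs {0..<n}) LK_adj r (Vs {0..<n}) i)"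
        by (intro UN_I[of 0]) simp_all
    qed
  qed
  then have ne: "?S \<noteq> {}" by blast
  have "\<forall>a\<in>?S. (r+2)^2 div 8 \<le> a" using main[OF _ rn] by auto
  then show ?thesis unfolding min_perc_def eq using Min_ge_iff[OF fin ne] by simp
qed

end
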